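(* Let $\xi$ be a jumping number of $\mathfrak a$ and let $F$ be an antinef divisor with integer coefficients such that $\xi=\xi_F$. Then there is a vertex $\nu$ with $\lambda(F,D;\nu)=\xi$ such that $v_\Gamma(\nu)\ge3$ or $\widehat d_\nu>0$. In particular every jumping number of $\mathfrak a$ lies in $\mathcal H^{\mathfrak a}_\nu$ for some vertex $\nu$ which is a star or satisfies $\widehat d_\nu>0$.
   Context: Setting: $R$ two-dimensional regular local ring with algebraically closed residue field; $\mathfrak a\subset R$ a proper nonzero complete ideal of finite colength; $\pi:X=X_{N+1}\to\cdots\to X_1=\operatorname{Spec}R$ a composition of point blowups with $\mathfrak a\mathcal O_X=\mathcal O_X(-D)$. $E_\nu$ strict, $E^*_\nu$ total transforms of exceptional divisors. Basis $\widehat E_\nu$ with $E_\mu\cdot\widehat E_\nu=-\delta_{\mu,\nu}$; $\mathfrak p_\nu$ the simple complete ideal with $\mathfrak p_\nu\mathcal O_X=\mathcal O_X(-\widehat E_\nu)$; $\mathfrak a=\prod\mathfrak p_\nu^{\widehat d_\nu}$, $D=\sum\widehat d_\nu\widehat E_\nu=\sum d_\nu E_\nu$. A divisor $F=\sum f_\nu E_\nu$ is antinef if $F\cdot E_\nu\le0$ for all $\nu$. Canonical divisor $K=\sum E^*_\nu=\sum k_\nu E_\nu$. Dual graph $\Gamma$ on vertices $1..N$, $\gamma\sim\eta$ iff $\gamma\neq\eta$ and $E_\gamma\cap E_\eta\ne\emptyset$; $v_\Gamma(\nu)$ = number of adjacent vertices; a star is a vertex of valence $\ge3$. $\lambda(F,D;\nu)=(f_\nu+k_\nu+1)/d_\nu$,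 $\xi_F=\min_\nu\lambda(F,D;\nu)$; the jumping numbers of $\mathfrak a$ (the values where the multiplier ideals $\mathcal J(\mathfrak a^\xi)=\Gamma(X,\mathcal O_X(K-\lfloor\xi D\rfloor))$ jump) are exactly the numbers $\xi_F$ with $F$ antinef with integer coefficients. $\mathcal H^{\mathfrak a}_\nu=\{\xi_F\mid F\text{ antinef},\ \xi_F=\lambda(F,D;\nu)\}$. *)

theory Defs
  imports Complex_Main
begin

text \<open>
The sequence of point blowups
X_{N+1} -> ... -> X_1 = Spec R is encoded by its proximity relation:
prox i j (for 1 <= j < i <= N) means that the centre p_i (a point of X_i)
lies on the strict transform of E_j in X_i. Divisors supported on the
exceptional locus are coefficient functions F :: nat => int in the basis
E_1 .. E_N of strict transforms (values outside 1..N are ignored).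
\<close>

text \<open>blow_adj prox i j k: the strict transforms of E_j and E_k (j,k < i)
meet in X_i.  Blowing up p_i separates the two components through p_i (if
p_i is a satellite point) and the new divisor E_i meets exactly the
components through p_i.\<close>
fun blow_adj :: "(nat \<Rightarrow> nat \<Rightarrow> bool) \<Rightarrow> nat \<Rightarrow> nat \<Rightarrow> nat \<Rightarrow> bool" where
  "blow_adj prox 0 j k = False"
| "blow_adj prox (Suc i) j k =
     (if i = 0 then False else
       ((j < i \<and> k < i \<and> blow_adj prox i j k \<and> \<not> (prox i j \<and> prox i k))
        \<or> (j = i \<and> k < i \<and> prox i k)
        \<or> (k = i \<and> j < i \<and> prox i j)))"

text \<open>Valid sequences of N point blowups (residue field algebraically closed):
each p_i, i >= 2, lies on the exceptional locus of X_i -> X_1 and is either a free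
point on exactly one component, or the intersection point of two components.\<close>
definition valid_blowups :: "(nat \<Rightarrow> nat \<Rightarrow> bool) \<Rightarrow> nat \<Rightarrow> bool" where
  "valid_blowups prox N \<longleftrightarrow>
     (\<forall>i j. prox i j \<longrightarrow> 1 \<le> j \<and> j < i \<and> i \<le> N) \<and>
     (\<forall>i\<in>{2..N}. (\<exists>j. {j'. prox i j'} = {j}) \<or>
                  (\<exists>j k. j \<noteq> k \<and> {j'. prox i j'} = {j, k} \<and> blow_adj prox i j k))"

definition dual_adj :: "(nat \<Rightarrow> nat \<Rightarrow> bool) \<Rightarrow> nat \<Rightarrow> nat \<Rightarrow> nat \<Rightarrow> bool" where
  "dual_adj prox N \<gamma> \<eta> \<longleftrightarrow> \<gamma> \<noteq> \<eta> \<and> blow_adj prox (Suc N) \<gamma> \<eta>"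

definition valence :: "(nat \<Rightarrow> nat \<Rightarrow> bool) \<Rightarrow> nat \<Rightarrow> nat \<Rightarrow> nat" where
  "valence prox N \<nu> = card {\<eta> \<in> {1..N}. dual_adj prox N \<nu> \<eta>}"

text \<open>Intersection numbers E_mu . E_nu, computed from
E_nu = E*_nu - (sum of E*_mu, mu proximate to nu) and E*_mu . E*_nu = - delta.\<close>
definition inum :: "(nat \<Rightarrow> nat \<Rightarrow> bool) \<Rightarrow> nat \<Rightarrow> nat \<Rightarrow> nat \<Rightarrow> int" where
  "inum prox N \<mu> \<nu> =
     (if \<mu> = \<nu> then - 1 - int (card {\<alpha> \<in> {1..N}. prox \<alpha> \<nu>})
      else (if prox \<nu> \<mu> \<or> prox \<mu> \<nu> then 1 else 0)
           - int (card {\<alpha> \<in> {1..N}. prox \<alpha> \<mu> \<and> prox \<alpha> \<nu>}))"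

definition dotE :: "(nat \<Rightarrow> nat \<Rightarrow> bool) \<Rightarrow> nat \<Rightarrow> (nat \<Rightarrow> int) \<Rightarrow> nat \<Rightarrow> int" where
  "dotE prox N F \<nu> = (\<Sum>\<mu>\<in>{1..N}. F \<mu> * inum prox N \<mu> \<nu>)"

definition antinef :: "(nat \<Rightarrow> nat \<Rightarrow> bool) \<Rightarrow> nat \<Rightarrow> (nat \<Rightarrow> int) \<Rightarrow> bool" where
  "antinef prox N F \<longleftrightarrow> (\<forall>\<nu>\<in>{1..N}. dotE prox N F \<nu> \<le> 0)"

text \<open>hat d_nu = - D . E_nu, so that D = sum hat d_nu hat E_nu.\<close>
definition dhat :: "(nat \<Rightarrow> nat \<Rightarrow> bool) \<Rightarrow> nat \<Rightarrow> (nat \<Rightarrow> int) \<Rightarrow> nat \<Rightarrow> int" where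
  "dhat prox N D \<nu> = - dotE prox N D \<nu>"

text \<open>estar prox N nu gamma: coefficient of E_gamma in the total transform E*_nu,
via E*_nu = E_nu + sum of E*_mu over mu proximate to nu.\<close>
function estar :: "(nat \<Rightarrow> nat \<Rightarrow> bool) \<Rightarrow> nat \<Rightarrow> nat \<Rightarrow> nat \<Rightarrow> int" where
  "estar prox N \<nu> \<gamma> =
     (if N < \<nu> then 0
      else (if \<gamma> = \<nu> then 1 else 0) +
           (\<Sum>\<mu>\<in>{\<mu>. \<nu> < \<mu> \<and> \<mu> \<le> N \<and> prox \<mu> \<nu>}. estar prox N \<mu> \<gamma>))"
  by pat_completeness auto
termination
  by (relation "measure (\<lambda>(prox, N, \<nu>, \<gamma>). Suc N - \<nu>)") auto

text \<open>k_nu: coefficient of E_nu in K = sum of the E*_rho.\<close>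
definition kcoef :: "(nat \<Rightarrow> nat \<Rightarrow> bool) \<Rightarrow> nat \<Rightarrow> nat \<Rightarrow> int" where
  "kcoef prox N \<nu> = (\<Sum>\<rho>\<in>{1..N}. estar prox N \<rho> \<nu>)"

definition lam :: "(nat \<Rightarrow> nat \<Rightarrow> bool) \<Rightarrow> nat \<Rightarrow> (nat \<Rightarrow> int) \<Rightarrow> (nat \<Rightarrow> int) \<Rightarrow> nat \<Rightarrow> real" where
  "lam prox N F D \<nu> = real_of_int (F \<nu> + kcoef prox N \<nu> + 1) / real_of_int (D \<nu>)"

definition xi :: "(nat \<Rightarrow> nat \<Rightarrow> bool) \<Rightarrow> nat \<Rightarrow> (nat \<Rightarrow> int) \<Rightarrow> (nat \<Rightarrow> int) \<Rightarrow> real" where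
  "xi prox N F D = Min ((lam prox N F D) ` {1..N})"

text \<open>Jumping numbers of the ideal corresponding to D: the xi_F, F antinef integral.\<close>
definition jumping_numbers :: "(nat \<Rightarrow> nat \<Rightarrow> bool) \<Rightarrow> nat \<Rightarrow> (nat \<Rightarrow> int) \<Rightarrow> real set" where
  "jumping_numbers prox N D = {xi prox N F D | F. antinef prox N F}"

definition Hset :: "(nat \<Rightarrow> nat \<Rightarrow> bool) \<Rightarrow> nat \<Rightarrow> (nat \<Rightarrow> int) \<Rightarrow> nat \<Rightarrow> real set" where
  "Hset prox N D \<nu> = {xi prox N F D | F. antinef prox N F \<and> xi prox N F D = lam prox N F D \<nu>}"

end

theory Submission
  imports Defs
begin


definition vb_bounds :: "(nat \<Rightarrow> nat \<Rightarrow> bool) \<Rightarrow> nat \<Rightarrow> bool" where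
  "vb_bounds prox N \<longleftrightarrow> (\<forall>i j. prox i j \<longrightarrow> 1 \<le> j \<and> j < i \<and> i \<le> N)"

lemma vb_bounds: "valid_blowups prox N \<Longrightarrow> prox i j \<Longrightarrow> 1 \<le> j \<and> j < i \<and> i \<le> N"
  unfolding valid_blowups_def by blast

lemma blow_adj_sym: "blow_adj prox m j k = blow_adj prox m k j"
  by (induction m) auto

lemma blow_adj_lt: "blow_adj prox m j k \<Longrightarrow> k < m"
  by (induction m arbitrary: j k) (auto split: if_splits dest: less_SucI)

lemma blow_adj_ge1:
  assumes "valid_blowups prox N" shows "blow_adj prox m j k \<Longrightarrow> 1 \<le> k"
proof (induction m arbitrary: j k)
  case 0 then show ?case by simp
next
  case (Suc m) then show ?case by (auto split: if_splits dest: vb_bounds[OF assms])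
qed

lemma blow_adj_irrefl: "\<not> blow_adj prox m j j"
  by (induction m) auto

lemma prox_pair:
  assumes v: "valid_blowups prox N" and a: "prox m a" "prox m b" "a \<noteq> b"
  shows "blow_adj prox m a b"
proof -
  have m: "m \<in> {2..N}" using vb_bounds[OF v a(1)] by auto
  have "(\<exists>j. {j'. prox m j'} = {j}) \<or>
                  (\<exists>j k. j \<noteq> k \<and> {j'. prox m j'} = {j, k} \<and> blow_adj prox m j k)"
    using v m unfolding valid_blowups_def by blast
  then show ?thesis
  proof
    assume "\<exists>j. {j'. prox m j'} = {j}"
    then obtain j where "{j'. prox m j'} = {j}" by blast
    then have "a = j" "b = j" using a by blast+
    then show ?thesis using a by simp
  next
    assume "\<exists>j k. j \<noteq> k \<and> {j'. prox m j'} = {j, k} \<and> blow_adj prox m j k"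
    then obtain j k where jk: "j \<noteq> k" "{j'. prox m j'} = {j, k}" "blow_adj prox m j k" by blast
    have "a \<in> {j,k}" "b \<in> {j,k}" using a jk(2) by blast+
    then show ?thesis using jk a(3) blow_adj_sym by blast
  qed
qed

lemma prox_exists:
  assumes v: "valid_blowups prox N" and m: "2 \<le> m" "m \<le> N"
  shows "\<exists>j. prox m j"
proof -
  have "(\<exists>j. {j'. prox m j'} = {j}) \<or>
                  (\<exists>j k. j \<noteq> k \<and> {j'. prox m j'} = {j, k} \<and> blow_adj prox m j k)"
    using v m unfolding valid_blowups_def by auto
  then show ?thesis by (metis (mono_tags) insertI1 mem_Collect_eq)
qed


lemma card_Suc_split:
  "card {\<alpha>\<in>{1..<Suc m}. P \<alpha>} = card {\<alpha>\<in>{1..<m}. P \<alpha>} + (if P m \<and> 1 \<le> m then 1 else 0)"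
proof -
  have "{\<alpha>\<in>{1..<Suc m}. P \<alpha>} = {\<alpha>\<in>{1..<m}. P \<alpha>} \<union> (if P m \<and> 1 \<le> m then {m} else {})"
    by (auto simp: less_Suc_eq)
  then show ?thesis by auto
qed

lemma level_aux: "(if P then 1 else 0) - int c = (if B then 1 else (0::int)) \<Longrightarrow> B' = (B \<and> \<not>Q) \<Longrightarrow>
  c' = c + (if Q then 1 else 0) \<Longrightarrow> (Q \<Longrightarrow> B) \<Longrightarrow> (if P then 1 else 0) - int c' = (if B' then 1 else 0)"
  by (cases P; cases Q; cases B; auto)

lemma level_inum:
  assumes v: "valid_blowups prox N"
  shows "m \<le> Suc N \<Longrightarrow> \<mu> \<in> {1..<m} \<Longrightarrow> \<nu> \<in> {1..<m} \<Longrightarrow> \<mu> \<noteq> \<nu> \<Longrightarrow>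
    (if prox \<nu> \<mu> \<or> prox \<mu> \<nu> then 1 else 0) - int (card {\<alpha>\<in>{1..<m}. prox \<alpha> \<mu> \<and> prox \<alpha> \<nu>})
     = (if blow_adj prox m \<mu> \<nu> then 1 else (0::int))"
proof (induction m arbitrary: \<mu> \<nu>)
  case 0 then show ?case by simp
next
  case (Suc m)
  note b = vb_bounds[OF v]
  have m1: "1 \<le> m" using Suc.prems by auto
  have bs: "blow_adj prox (Suc m) \<mu> \<nu> =
       ((\<mu> < m \<and> \<nu> < m \<and> blow_adj prox m \<mu> \<nu> \<and> \<not> (prox m \<mu> \<and> prox m \<nu>))
        \<or> (\<mu> = m \<and> \<nu> < m \<and> prox m \<nu>)
        \<or> (\<nu> = m \<and> \<mu> < m \<and> prox m \<mu>))"
    using m1 by (simp only: blow_adj.simps if_False) simp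
  show ?case
  proof (cases "\<mu> < m \<and> \<nu> < m")
    case True
    have IH: "(if prox \<nu> \<mu> \<or> prox \<mu> \<nu> then 1 else 0) - int (card {\<alpha>\<in>{1..<m}. prox \<alpha> \<mu> \<and> prox \<alpha> \<nu>})
     = (if blow_adj prox m \<mu> \<nu> then 1 else (0::int))"
      using Suc True by auto
    have pp: "prox m \<mu> \<and> prox m \<nu> \<Longrightarrow> blow_adj prox m \<mu> \<nu>"
      using prox_pair[OF v] Suc.prems by blast
    have bs2: "blow_adj prox (Suc m) \<mu> \<nu> = (blow_adj prox m \<mu> \<nu> \<and> \<not> (prox m \<mu> \<and> prox m \<nu>))"
      using True bs by auto
    have cs: "card {\<alpha>\<in>{1..<Suc m}. prox \<alpha> \<mu> \<and> prox \<alpha> \<nu>} = card {\<alpha>\<in>{1..<m}. prox \<alpha> \<mu> \<and> prox \<alpha> \<nu>} + (if prox m \<mu> \<and> prox m \<nu> then 1 else 0)"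
      using card_Suc_split[of m "\<lambda>\<alpha>. prox \<alpha> \<mu> \<and> prox \<alpha> \<nu>"] m1 by simp
    show ?thesis by (rule level_aux[OF IH bs2 cs pp])
  next
    case False
    then have c: "\<mu> = m \<and> \<nu> < m \<or> \<nu> = m \<and> \<mu> < m" using Suc.prems by auto
    have e: "{\<alpha>\<in>{1..<Suc m}. prox \<alpha> \<mu> \<and> prox \<alpha> \<nu>} = {}"
      using c b by fastforce
    have bm: "blow_adj prox (Suc m) \<mu> \<nu> = (if \<mu> = m then prox m \<nu> else prox m \<mu>)"
      using c bs by auto
    have n1: "\<not> prox \<mu> \<nu>" if "\<mu> < m" "\<nu> = m" using b that by force
    have n2: "\<not> prox \<nu> \<mu>" if "\<nu> < m" "\<mu> = m" using b that by force
    show ?thesis using e c bm n1 n2 by (auto simp del: blow_adj.simps)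
  qed
qed

lemma inum_offdiag:
  assumes v: "valid_blowups prox N" and "\<mu> \<in> {1..N}" "\<nu> \<in> {1..N}" "\<mu> \<noteq> \<nu>"
  shows "inum prox N \<mu> \<nu> = (if dual_adj prox N \<mu> \<nu> then 1 else 0)"
proof -
  have "{1..<Suc N} = {1..N}" by auto
  then show ?thesis using level_inum[OF v, of "Suc N" \<mu> \<nu>] assms
    unfolding inum_def dual_adj_def by auto
qed

lemma inum_uniform:
  assumes v: "valid_blowups prox N"
  shows "inum prox N \<mu> \<nu> = - (if \<mu> = \<nu> then 1 else 0) + (if prox \<nu> \<mu> then 1 else 0)
     + (if prox \<mu> \<nu> then 1 else 0) - int (card {\<alpha>\<in>{1..N}. prox \<alpha> \<mu> \<and> prox \<alpha> \<nu>})"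
proof (cases "\<mu> = \<nu>")
  case True
  have "\<not> prox \<nu> \<nu>" using vb_bounds[OF v, of \<nu> \<nu>] by auto
  then show ?thesis using True unfolding inum_def by simp
next
  case False
  have "\<not> (prox \<nu> \<mu> \<and> prox \<mu> \<nu>)" using vb_bounds[OF v, of \<mu> \<nu>] vb_bounds[OF v, of \<nu> \<mu>] by auto
  then show ?thesis using False unfolding inum_def by auto
qed



declare estar.simps[simp del]

lemma sum_ind: "finite A \<Longrightarrow> (\<Sum>x\<in>A. if P x then 1 else 0 :: int) = int (card {x\<in>A. P x})"
  by (simp add: sum.inter_filter[symmetric])

lemma ind_mult: "(if P then 1 else 0) * (x::int) = (if P then x else 0)" by simp

lemma estar_unfold: "\<rho> \<le> N \<Longrightarrow> estar prox N \<rho> \<gamma> = (if \<gamma> = \<rho> then 1 else 0) +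
   (\<Sum>\<alpha>\<in>{\<alpha>. \<rho> < \<alpha> \<and> \<alpha> \<le> N \<and> prox \<alpha> \<rho>}. estar prox N \<alpha> \<gamma>)"
  by (subst estar.simps) simp

lemma estar_dot:
  assumes v: "valid_blowups prox N" and nu: "\<nu> \<in> {1..N}"
  shows "\<rho> \<in> {1..N} \<Longrightarrow> (\<Sum>\<mu>\<in>{1..N}. estar prox N \<rho> \<mu> * inum prox N \<mu> \<nu>)
        = - (if \<rho> = \<nu> then 1 else 0) + (if prox \<rho> \<nu> then 1 else 0)"
proof (induction "N - \<rho>" arbitrary: \<rho> rule: less_induct)
  case less
  note b = vb_bounds[OF v]
  define A where "A = {\<alpha>. \<rho> < \<alpha> \<and> \<alpha> \<le> N \<and> prox \<alpha> \<rho>}"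
  have A1: "A = {\<alpha>\<in>{1..N}. prox \<alpha> \<rho>}" using less.prems unfolding A_def by (fastforce dest: b)
  have fA: "finite A" unfolding A1 by simp
  have IH: "\<alpha> \<in> A \<Longrightarrow> (\<Sum>\<mu>\<in>{1..N}. estar prox N \<alpha> \<mu> * inum prox N \<mu> \<nu>)
        = - (if \<alpha> = \<nu> then 1 else 0) + (if prox \<alpha> \<nu> then 1 else 0)" for \<alpha>
    using less.hyps[of \<alpha>] less.prems unfolding A_def by auto
  have "(\<Sum>\<mu>\<in>{1..N}. estar prox N \<rho> \<mu> * inum prox N \<mu> \<nu>)
     = (\<Sum>\<mu>\<in>{1..N}. (if \<mu> = \<rho> then 1 else 0) * inum prox N \<mu> \<nu> +
            (\<Sum>\<alpha>\<in>A. estar prox N \<alpha> \<mu> * inum prox N \<mu> \<nu>))"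
    using less.prems by (intro sum.cong refl) (simp add: estar_unfold[of \<rho> N] A_def sum_distrib_right sum_distrib_left algebra_simps)
  also have "\<dots> = inum prox N \<rho> \<nu> + (\<Sum>\<alpha>\<in>A. \<Sum>\<mu>\<in>{1..N}. estar prox N \<alpha> \<mu> * inum prox N \<mu> \<nu>)"
    using less.prems by (simp add: sum.distrib sum.swap[of _ A] ind_mult)
  also have "\<dots> = inum prox N \<rho> \<nu> + (\<Sum>\<alpha>\<in>A. - (if \<alpha> = \<nu> then 1 else 0) + (if prox \<alpha> \<nu> then 1 else 0))"
    using IH by simp
  also have "\<dots> = inum prox N \<rho> \<nu> - (if \<nu> \<in> A then 1 else 0) + int (card {\<alpha>\<in>A. prox \<alpha> \<nu>})"
    using fA by (simp add: sum_subtractf sum_ind)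
  also have "\<dots> = - (if \<rho> = \<nu> then 1 else 0) + (if prox \<rho> \<nu> then 1 else 0)"
  proof -
    have "(\<nu> \<in> A) = prox \<nu> \<rho>" using nu unfolding A1 by auto
    moreover have "{\<alpha>\<in>A. prox \<alpha> \<nu>} = {\<alpha>\<in>{1..N}. prox \<alpha> \<rho> \<and> prox \<alpha> \<nu>}" unfolding A1 by auto
    ultimately show ?thesis by (simp add: inum_uniform[OF v])
  qed
  finally show ?case .
qed

lemma K_dot:
  assumes v: "valid_blowups prox N" and nu: "\<nu> \<in> {1..N}"
  shows "(\<Sum>\<mu>\<in>{1..N}. kcoef prox N \<mu> * inum prox N \<mu> \<nu>) = - 2 - inum prox N \<nu> \<nu>"
proof -
  have "(\<Sum>\<mu>\<in>{1..N}. kcoef prox N \<mu> * inum prox N \<mu> \<nu>)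
      = (\<Sum>\<rho>\<in>{1..N}. \<Sum>\<mu>\<in>{1..N}. estar prox N \<rho> \<mu> * inum prox N \<mu> \<nu>)"
    unfolding kcoef_def sum_distrib_right by (rule sum.swap)
  also have "\<dots> = (\<Sum>\<rho>\<in>{1..N}. - (if \<rho> = \<nu> then 1 else 0) + (if prox \<rho> \<nu> then 1 else 0))"
    using estar_dot[OF v nu] by simp
  also have "\<dots> = -1 + int (card {\<rho>\<in>{1..N}. prox \<rho> \<nu>})"
    using nu by (simp add: sum_subtractf sum_ind)
  also have "\<dots> = - 2 - inum prox N \<nu> \<nu>" unfolding inum_def by simp
  finally show ?thesis .
qed



definition mc :: "(nat \<Rightarrow> nat \<Rightarrow> bool) \<Rightarrow> nat \<Rightarrow> (nat \<Rightarrow> int) \<Rightarrow> nat \<Rightarrow> int" where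
  "mc prox N D \<gamma> = D \<gamma> - (\<Sum>j\<in>{1..N}. if prox \<gamma> j then D j else 0)"

lemma sum_if_diff: "(\<Sum>x\<in>A. if P x then (a x - b x) else 0) = (\<Sum>x\<in>A. if P x then a x else 0) - (\<Sum>x\<in>A. if P x then b x else (0::int))"
  by (auto simp add: sum_subtractf[symmetric] intro!: sum.cong)

lemma dot_mc:
  assumes v: "valid_blowups prox N" and nu: "\<nu> \<in> {1..N}"
  shows "dotE prox N D \<nu> = - mc prox N D \<nu> + (\<Sum>\<alpha>\<in>{1..N}. if prox \<alpha> \<nu> then mc prox N D \<alpha> else 0)"
proof -
  let ?I = "{1..N}"
  have "dotE prox N D \<nu> = (\<Sum>\<mu>\<in>?I. D \<mu> * (- (if \<mu> = \<nu> then 1 else 0) + (if prox \<nu> \<mu> then 1 else 0)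
     + (if prox \<mu> \<nu> then 1 else 0) - (\<Sum>\<alpha>\<in>?I. if prox \<alpha> \<mu> \<and> prox \<alpha> \<nu> then 1 else 0)))"
    unfolding dotE_def by (intro sum.cong refl) (simp add: inum_uniform[OF v] sum_ind)
  also have "\<dots> = (\<Sum>\<mu>\<in>?I. - (if \<mu> = \<nu> then D \<mu> else 0) + (if prox \<nu> \<mu> then D \<mu> else 0)
     + (if prox \<mu> \<nu> then D \<mu> else 0) - (\<Sum>\<alpha>\<in>?I. if prox \<alpha> \<mu> \<and> prox \<alpha> \<nu> then D \<mu> else 0))"
    by (intro sum.cong refl) (simp add: algebra_simps sum_distrib_left if_distrib cong: if_cong)
  also have "\<dots> = - D \<nu> + (\<Sum>\<mu>\<in>?I. if prox \<nu> \<mu> then D \<mu> else 0) + (\<Sum>\<mu>\<in>?I. if prox \<mu> \<nu> then D \<mu> else 0)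
      - (\<Sum>\<mu>\<in>?I. \<Sum>\<alpha>\<in>?I. if prox \<alpha> \<mu> \<and> prox \<alpha> \<nu> then D \<mu> else 0)"
    using nu by (simp add: sum.distrib sum_subtractf sum_negf)
  also have "(\<Sum>\<mu>\<in>?I. \<Sum>\<alpha>\<in>?I. if prox \<alpha> \<mu> \<and> prox \<alpha> \<nu> then D \<mu> else 0)
      = (\<Sum>\<alpha>\<in>?I. if prox \<alpha> \<nu> then (\<Sum>\<mu>\<in>?I. if prox \<alpha> \<mu> then D \<mu> else 0) else 0)"
    by (subst sum.swap) (intro sum.cong refl, auto)
  finally show ?thesis
    unfolding mc_def by (simp add: sum_if_diff)
qed


lemma mc_rec:
  assumes v: "valid_blowups prox N" and a: "antinef prox N D" and nu: "\<nu> \<in> {1..N}"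
  shows "(\<Sum>\<alpha>\<in>{1..N}. if prox \<alpha> \<nu> then mc prox N D \<alpha> else 0) \<le> mc prox N D \<nu>"
proof -
  have "dotE prox N D \<nu> \<le> 0" using a nu unfolding antinef_def by blast
  then show ?thesis using dot_mc[OF v nu, of D] by linarith
qed

lemma mc_nonneg:
  assumes v: "valid_blowups prox N" and a: "antinef prox N D"
  shows "\<nu> \<in> {1..N} \<Longrightarrow> 0 \<le> mc prox N D \<nu>"
proof (induction "N - \<nu>" arbitrary: \<nu> rule: less_induct)
  case less
  have "0 \<le> (\<Sum>\<alpha>\<in>{1..N}. if prox \<alpha> \<nu> then mc prox N D \<alpha> else 0)"
  proof (rule sum_nonneg)
    fix \<alpha> assume "\<alpha> \<in> {1..N}"
    then show "0 \<le> (if prox \<alpha> \<nu> then mc prox N D \<alpha> else 0)"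
      using less vb_bounds[OF v, of \<alpha> \<nu>] by auto
  qed
  then show ?case using mc_rec[OF v a less.prems] by linarith
qed

lemma mc_mono:
  assumes v: "valid_blowups prox N" and a: "antinef prox N D" and p: "prox \<gamma> j"
  shows "mc prox N D \<gamma> \<le> mc prox N D j"
proof -
  have g: "\<gamma> \<in> {1..N}" "j \<in> {1..N}" using vb_bounds[OF v p] by auto
  have "mc prox N D \<gamma> = (if prox \<gamma> j then mc prox N D \<gamma> else 0)" using p by simp
  also have "\<dots> \<le> (\<Sum>\<alpha>\<in>{1..N}. if prox \<alpha> j then mc prox N D \<alpha> else 0)"
    by (rule member_le_sum[where f="\<lambda>\<alpha>. if prox \<alpha> j then mc prox N D \<alpha> else 0", OF g(1)])
       (auto intro: mc_nonneg[OF v a])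
  also have "\<dots> \<le> mc prox N D j" by (rule mc_rec[OF v a g(2)])
  finally show ?thesis .
qed

lemma mc_le1:
  assumes v: "valid_blowups prox N" and a: "antinef prox N D"
  shows "\<gamma> \<in> {1..N} \<Longrightarrow> mc prox N D \<gamma> \<le> mc prox N D 1"
proof (induction \<gamma> rule: less_induct)
  case (less \<gamma>)
  show ?case
  proof (cases "\<gamma> = 1")
    case True then show ?thesis by simp
  next
    case False
    then obtain j where j: "prox \<gamma> j" using prox_exists[OF v, of \<gamma>] less.prems by auto
    then have "j < \<gamma>" "j \<in> {1..N}" using vb_bounds[OF v j] by auto
    then show ?thesis using less.IH mc_mono[OF v a j] by force
  qed
qed

lemma D_rec: "D \<gamma> = mc prox N D \<gamma> + (\<Sum>j\<in>{1..N}. if prox \<gamma> j then D j else 0)"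
  unfolding mc_def by simp

lemma D_pos:
  assumes v: "valid_blowups prox N" and a: "antinef prox N D" and nz: "\<exists>\<nu>\<in>{1..N}. D \<nu> \<noteq> 0"
  shows "\<gamma> \<in> {1..N} \<Longrightarrow> D \<gamma> > 0"
proof -
  have s0: "(\<Sum>j\<in>{1..N}. if prox 1 j then D j else 0) = 0"
    by (intro sum.neutral) (auto dest: vb_bounds[OF v])
  have m1: "mc prox N D 1 > 0"
  proof (rule ccontr)
    assume "\<not> 0 < mc prox N D 1"
    then have z: "\<gamma> \<in> {1..N} \<Longrightarrow> mc prox N D \<gamma> = 0" for \<gamma>
      using mc_le1[OF v a, of \<gamma>] mc_nonneg[OF v a, of \<gamma>] by linarith
    have "\<gamma> \<in> {1..N} \<Longrightarrow> D \<gamma> = 0" for \<gamma>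
    proof (induction \<gamma> rule: less_induct)
      case (less \<gamma>)
      have "(\<Sum>j\<in>{1..N}. if prox \<gamma> j then D j else 0) = 0"
        by (intro sum.neutral) (auto dest: vb_bounds[OF v] intro: less.IH)
      then show ?case using D_rec[of D \<gamma> prox N] z[OF less.prems] by simp
    qed
    then show False using nz by auto
  qed
  have "\<gamma> \<in> {1..N} \<Longrightarrow> D 1 \<le> D \<gamma>" for \<gamma>
  proof (induction \<gamma> rule: less_induct)
    case (less \<gamma>)
    show ?case
    proof (cases "\<gamma> = 1")
      case True then show ?thesis by simp
    next
      case False
      then obtain j where j: "prox \<gamma> j" using prox_exists[OF v, of \<gamma>] less.prems by auto
      then have jj: "j < \<gamma>" "j \<in> {1..N}" using vb_bounds[OF v j] by auto
      have D1: "D 1 = mc prox N D 1" using D_rec[of D 1 prox N] s0 by simp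
      have "D 1 \<le> D j" using less.IH jj by auto
      also have "\<dots> = (if prox \<gamma> j then D j else 0)" using j by simp
      also have "\<dots> \<le> (\<Sum>j\<in>{1..N}. if prox \<gamma> j then D j else 0)"
      proof (rule member_le_sum[where f="\<lambda>j. if prox \<gamma> j then D j else 0", OF jj(2)])
        fix x assume x: "x \<in> {1..N} - {j}"
        show "0 \<le> (if prox \<gamma> x then D x else 0)"
        proof (cases "prox \<gamma> x")
          case True
          then have "x < \<gamma>" "x \<in> {1..N}" using vb_bounds[OF v True] by auto
          then show ?thesis using less.IH[of x] D1 m1 True by auto
        qed simp
      qed simp
      also have "\<dots> \<le> D \<gamma>" using D_rec[of D \<gamma> prox N] mc_nonneg[OF v a less.prems] by linarith
      finally show ?thesis .
    qed
  qed
  moreover have "D 1 > 0" using D_rec[of D 1 prox N] s0 m1 by simp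
  ultimately show "\<gamma> \<in> {1..N} \<Longrightarrow> D \<gamma> > 0" by fastforce
qed



lemma ba_Suc: "1 \<le> i \<Longrightarrow> blow_adj prox (Suc i) j k =
       ((j < i \<and> k < i \<and> blow_adj prox i j k \<and> \<not> (prox i j \<and> prox i k))
        \<or> (j = i \<and> k < i \<and> prox i k)
        \<or> (k = i \<and> j < i \<and> prox i j))"
  by simp

declare blow_adj.simps[simp del]

lemma conn_level:
  assumes v: "valid_blowups prox N"
  shows "m \<le> N \<Longrightarrow> T \<subseteq> {1..m} \<Longrightarrow> T \<noteq> {} \<Longrightarrow>
     (\<forall>j\<in>T. \<forall>k\<in>{1..m}. blow_adj prox (Suc m) j k \<longrightarrow> k \<in> T) \<Longrightarrow> T = {1..m}"
proof (induction m arbitrary: T)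
  case 0 then show ?case by auto
next
  case (Suc m)
  show ?case
  proof (cases "m = 0")
    case True then show ?thesis using Suc.prems by auto
  next
    case False
    define i where "i = Suc m"
    have i2: "2 \<le> i" "i \<le> N" using False Suc.prems unfolding i_def by auto
    have i1: "1 \<le> i" using i2 by simp
    note ba = ba_Suc[OF i1, of prox]
    obtain j0 where j0: "prox i j0" using prox_exists[OF v i2] by auto
    have j0r: "j0 \<in> {1..m}" using vb_bounds[OF v j0] unfolding i_def by auto
    have cl: "j \<in> T \<Longrightarrow> k \<in> {1..i} \<Longrightarrow> blow_adj prox (Suc i) j k \<Longrightarrow> k \<in> T" for j k
      using Suc.prems(4) unfolding i_def by blast
    define T' where "T' = T - {i}"
    have T'sub: "T' \<subseteq> {1..m}" using Suc.prems(2) unfolding T'_def i_def by auto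
    have T'ne: "T' \<noteq> {}"
    proof
      assume "T' = {}"
      then have "T = {i}" using Suc.prems(2,3) unfolding T'_def by auto
      moreover have "blow_adj prox (Suc i) i j0" using ba[of i j0] j0 j0r unfolding i_def by simp
      ultimately have "j0 \<in> T" using cl[of i j0] j0r unfolding i_def by auto
      then show False using \<open>T = {i}\<close> j0r unfolding i_def by auto
    qed
    have T'cl: "\<forall>j\<in>T'. \<forall>k\<in>{1..m}. blow_adj prox (Suc m) j k \<longrightarrow> k \<in> T'"
    proof (intro ballI impI)
      fix j k assume j: "j \<in> T'" and k: "k \<in> {1..m}" and b: "blow_adj prox (Suc m) j k"
      have jr: "j < i" "k < i" using j T'sub k unfolding i_def by auto
      have ki: "k \<in> {1..i}" "j \<in> T" using k j unfolding i_def T'_def by auto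
      have kT: "k \<in> T"
      proof (cases "prox i j \<and> prox i k")
        case False
        then have "blow_adj prox (Suc i) j k" using ba[of j k] b jr unfolding i_def by blast
        then show ?thesis using cl[of j k] ki by blast
      next
        case True
        then have "blow_adj prox (Suc i) j i" using ba[of j i] jr by blast
        moreover have "i \<in> {1..i}" using i2 by simp
        ultimately have "i \<in> T" using cl[of j i] ki by blast
        moreover have "blow_adj prox (Suc i) i k" using ba[of i k] jr True by blast
        ultimately show ?thesis using cl[of i k] ki by blast
      qed
      then show "k \<in> T'" using jr unfolding T'_def by auto
    qed
    have "T' = {1..m}" using Suc.IH[OF _ T'sub T'ne T'cl] Suc.prems(1) by auto
    moreover have "i \<in> T"
    proof -
      have j0T: "j0 \<in> T" using \<open>T' = {1..m}\<close> j0r unfolding T'_def by blast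
      have "j0 < i" using j0r unfolding i_def by simp
      then have "blow_adj prox (Suc i) j0 i" using ba[of j0 i] j0 by blast
      moreover have "i \<in> {1..i}" using i2 by simp
      ultimately show ?thesis using cl[of j0 i] j0T by blast
    qed
    ultimately have "T = insert i T'" unfolding T'_def by blast
    also have "\<dots> = insert (Suc m) {1..m}" using \<open>T' = {1..m}\<close> unfolding i_def by simp
    also have "\<dots> = {1..Suc m}" by (auto simp: le_Suc_eq)
    finally show ?thesis .
  qed
qed

lemma connected:
  assumes v: "valid_blowups prox N" and sub: "T \<subseteq> {1..N}" and ne: "T \<noteq> {}"
    and cl: "\<And>j k. j \<in> T \<Longrightarrow> k \<in> {1..N} \<Longrightarrow> dual_adj prox N j k \<Longrightarrow> k \<in> T"
  shows "T = {1..N}"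
proof (rule conn_level[OF v order_refl sub ne], intro ballI impI)
  fix j k assume "j \<in> T" "k \<in> {1..N}" "blow_adj prox (Suc N) j k"
  then show "k \<in> T" using cl[of j k] unfolding dual_adj_def by (cases "j = k") auto
qed


lemma leaf:
  assumes v: "valid_blowups prox N" and N1: "1 \<le> N"
  shows "\<exists>l\<in>{1..N}. valence prox N l \<le> 1"
proof -
  define Fr where "Fr = insert 1 {i\<in>{2..N}. \<exists>j. {j'. prox i j'} = {j}}"
  have fFr: "finite Fr" unfolding Fr_def by simp
  define i0 where "i0 = Max Fr"
  have i0Fr: "i0 \<in> Fr" unfolding i0_def by (rule Max_in[OF fFr]) (simp add: Fr_def)
  have i0max: "i \<in> Fr \<Longrightarrow> i \<le> i0" for i unfolding i0_def using fFr by simp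
  have i0r: "1 \<le> i0" "i0 \<le> N" using i0Fr N1 unfolding Fr_def by auto
  define nb where "nb m = {k. blow_adj prox m i0 k}" for m
  have fnb: "finite (nb m)" for m
  proof -
    have "nb m \<subseteq> {..<m}" unfolding nb_def using blow_adj_lt by blast
    then show ?thesis using finite_subset by blast
  qed
  have claim: "Suc i0 \<le> m \<Longrightarrow> m \<le> Suc N \<Longrightarrow> card (nb m) \<le> 1" for m
  proof (induction m)
    case 0 then show ?case by simp
  next
    case (Suc m)
    show ?case
    proof (cases "m = i0")
      case True
      have e: "nb (Suc m) = {k. k < i0 \<and> prox i0 k}"
        unfolding nb_def True using ba_Suc[OF i0r(1), of prox i0] by auto
      obtain j where sj: "{k. k < i0 \<and> prox i0 k} \<subseteq> {j}"
      proof (cases "i0 = 1")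
        case True
        then have "{k. k < i0 \<and> prox i0 k} = {}" using vb_bounds[OF v, of i0] by auto
        then show ?thesis using that by blast
      next
        case False
        then have "i0 \<in> {i\<in>{2..N}. \<exists>j. {j'. prox i j'} = {j}}" using i0Fr unfolding Fr_def by auto
        then obtain j where "{j'. prox i0 j'} = {j}" by blast
        then show ?thesis using that[of j] by blast
      qed
      show ?thesis unfolding e using card_mono[OF _ sj] by simp
    next
      case False
      then have mi: "i0 < m" "m \<le> N" using Suc.prems by auto
      have IH: "card (nb m) \<le> 1" using Suc.IH mi by auto
      have m2: "m \<in> {2..N}" using mi i0r by auto
      have m1: "1 \<le> m" using m2 by simp
      have nf: "\<not> (\<exists>j. {j'. prox m j'} = {j})"
      proof
        assume "\<exists>j. {j'. prox m j'} = {j}"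
        then have "m \<in> Fr" using m2 unfolding Fr_def by blast
        then show False using i0max mi by fastforce
      qed
      then obtain a b where ab: "a \<noteq> b" "{j'. prox m j'} = {a, b}" "blow_adj prox m a b"
        using v m2 unfolding valid_blowups_def by blast
      note bs = ba_Suc[OF m1, of prox i0]
      show ?thesis
      proof (cases "prox m i0")
        case True
        define ot where "ot = (if i0 = a then b else a)"
        have po: "prox m ot" "ot \<noteq> i0" using ab True unfolding ot_def by auto
        have "blow_adj prox m i0 ot" using prox_pair[OF v True po(1)] po(2) by auto
        then have onb: "ot \<in> nb m" unfolding nb_def by simp
        have "nb (Suc m) \<subseteq> insert m (nb m - {ot})"
        proof
          fix x assume "x \<in> nb (Suc m)"
          then have "blow_adj prox (Suc m) i0 x" unfolding nb_def by simp
          then have "(x < m \<and> blow_adj prox m i0 x \<and> \<not> prox m x) \<or> x = m"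
            using bs[of x] True mi by blast
          then show "x \<in> insert m (nb m - {ot})" unfolding nb_def using po by auto
        qed
        then have "card (nb (Suc m)) \<le> card (insert m (nb m - {ot}))"
          by (rule card_mono[rotated]) (simp add: fnb)
        also have "\<dots> \<le> Suc (card (nb m - {ot}))" by (rule card_insert_le_m1) auto
        also have "\<dots> = card (nb m)" using onb fnb[of m]
          by (simp add: card_Diff_singleton) (metis One_nat_def Suc_pred card_gt_0_iff empty_iff)
        finally show ?thesis using IH by simp
      next
        case False
        have "nb (Suc m) \<subseteq> nb m"
        proof
          fix x assume "x \<in> nb (Suc m)"
          then have "blow_adj prox (Suc m) i0 x" unfolding nb_def by simp
          then have "blow_adj prox m i0 x" using bs[of x] False mi by blast
          then show "x \<in> nb m" unfolding nb_def by simp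
        qed
        then show ?thesis using card_mono[OF fnb] IH by (meson le_trans)
      qed
    qed
  qed
  have "valence prox N i0 \<le> card (nb (Suc N))"
    unfolding valence_def
    by (rule card_mono[OF fnb]) (auto simp: nb_def dual_adj_def)
  also have "\<dots> \<le> 1" using claim i0r by simp
  finally show ?thesis using i0r by auto
qed



lemma dual_adj_sym: "dual_adj prox N a b = dual_adj prox N b a"
  unfolding dual_adj_def using blow_adj_sym by blast

lemma sum_inum:
  assumes v: "valid_blowups prox N" and nu: "\<nu> \<in> {1..N}"
  shows "(\<Sum>\<gamma>\<in>{1..N}. inum prox N \<gamma> \<nu>) = inum prox N \<nu> \<nu> + int (valence prox N \<nu>)"
proof -
  have "(\<Sum>\<gamma>\<in>{1..N}. inum prox N \<gamma> \<nu>) = inum prox N \<nu> \<nu> + (\<Sum>\<gamma>\<in>{1..N}-{\<nu>}. inum prox N \<gamma> \<nu>)"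
    using nu by (simp add: sum.remove)
  also have "(\<Sum>\<gamma>\<in>{1..N}-{\<nu>}. inum prox N \<gamma> \<nu>) = (\<Sum>\<gamma>\<in>{1..N}-{\<nu>}. if dual_adj prox N \<nu> \<gamma> then 1 else 0)"
    using nu by (intro sum.cong refl) (auto simp: inum_offdiag[OF v] dual_adj_sym)
  also have "\<dots> = int (card {\<gamma>\<in>{1..N}-{\<nu>}. dual_adj prox N \<nu> \<gamma>})" by (simp add: sum_ind)
  also have "{\<gamma>\<in>{1..N}-{\<nu>}. dual_adj prox N \<nu> \<gamma>} = {\<eta>\<in>{1..N}. dual_adj prox N \<nu> \<eta>}"
    unfolding dual_adj_def by auto
  finally show ?thesis unfolding valence_def by simp
qed

lemma g_dot:
  assumes v: "valid_blowups prox N" and nu: "\<nu> \<in> {1..N}"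
  shows "(\<Sum>\<gamma>\<in>{1..N}. (F \<gamma> + kcoef prox N \<gamma> + 1) * inum prox N \<gamma> \<nu>)
     = dotE prox N F \<nu> - 2 + int (valence prox N \<nu>)"
proof -
  have "(\<Sum>\<gamma>\<in>{1..N}. (F \<gamma> + kcoef prox N \<gamma> + 1) * inum prox N \<gamma> \<nu>)
     = dotE prox N F \<nu> + (\<Sum>\<gamma>\<in>{1..N}. kcoef prox N \<gamma> * inum prox N \<gamma> \<nu>) + (\<Sum>\<gamma>\<in>{1..N}. inum prox N \<gamma> \<nu>)"
    unfolding dotE_def by (simp add: distrib_right sum.distrib)
  then show ?thesis using K_dot[OF v nu] sum_inum[OF v nu] by simp
qed

lemma part1:
  assumes v: "valid_blowups prox N" and aD: "antinef prox N D" and nz: "\<exists>\<nu>\<in>{1..N}. D \<nu> \<noteq> 0"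
    and aF: "antinef prox N F"
  shows "\<exists>\<nu>\<in>{1..N}. lam prox N F D \<nu> = xi prox N F D \<and>
            (3 \<le> valence prox N \<nu> \<or> dhat prox N D \<nu> > 0)"
proof (rule ccontr)
  assume neg: "\<not> ?thesis"
  let ?I = "{1..N}"
  have N1: "1 \<le> N" using nz by auto
  define \<xi> where "\<xi> = xi prox N F D"
  define g where "g \<gamma> = F \<gamma> + kcoef prox N \<gamma> + 1" for \<gamma>
  define h where "h \<gamma> = real_of_int (g \<gamma>) - \<xi> * real_of_int (D \<gamma>)" for \<gamma>
  have dpos: "\<gamma> \<in> ?I \<Longrightarrow> D \<gamma> > 0" for \<gamma> using D_pos[OF v aD nz] by blast
  have fin: "finite (lam prox N F D ` ?I)" "lam prox N F D ` ?I \<noteq> {}" using N1 by auto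
  have xile: "\<gamma> \<in> ?I \<Longrightarrow> \<xi> \<le> lam prox N F D \<gamma>" for \<gamma>
    unfolding \<xi>_def xi_def by (rule Min_le[OF fin(1)]) auto
  have "\<xi> \<in> lam prox N F D ` ?I" unfolding \<xi>_def xi_def by (rule Min_in[OF fin])
  then obtain \<nu>0 where nu0: "\<nu>0 \<in> ?I" "lam prox N F D \<nu>0 = \<xi>" by auto
  define S where "S = {\<nu>\<in>?I. h \<nu> = 0}"
  have lam_h: "\<gamma> \<in> ?I \<Longrightarrow> lam prox N F D \<gamma> = \<xi> \<longleftrightarrow> h \<gamma> = 0" for \<gamma>
    using dpos[of \<gamma>] unfolding lam_def h_def g_def by (auto simp: field_simps)
  have hnn: "\<gamma> \<in> ?I \<Longrightarrow> 0 \<le> h \<gamma>" for \<gamma>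
    using dpos[of \<gamma>] xile[of \<gamma>] unfolding lam_def h_def g_def by (auto simp: field_simps)
  have Sprop: "\<nu> \<in> S \<Longrightarrow> 2 \<le> valence prox N \<nu> \<and> (\<forall>\<gamma>\<in>?I. dual_adj prox N \<nu> \<gamma> \<longrightarrow> \<gamma> \<in> S)" for \<nu>
  proof -
    assume nS: "\<nu> \<in> S"
    then have nI: "\<nu> \<in> ?I" and h0: "h \<nu> = 0" unfolding S_def by auto
    have lamv: "lam prox N F D \<nu> = xi prox N F D" using lam_h[OF nI] h0 unfolding \<xi>_def by simp
    have val2: "valence prox N \<nu> \<le> 2" and dh: "dhat prox N D \<nu> \<le> 0" using neg nI lamv by auto
    have "dotE prox N D \<nu> \<le> 0" using aD nI unfolding antinef_def by blast
    then have dD: "dotE prox N D \<nu> = 0" using dh unfolding dhat_def by simp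
    have dF: "dotE prox N F \<nu> \<le> 0" using aF nI unfolding antinef_def by blast
    define A where "A = {\<gamma>\<in>?I. dual_adj prox N \<nu> \<gamma>}"
    have "(\<Sum>\<gamma>\<in>?I. h \<gamma> * real_of_int (inum prox N \<gamma> \<nu>))
        = real_of_int (\<Sum>\<gamma>\<in>?I. g \<gamma> * inum prox N \<gamma> \<nu>) - \<xi> * real_of_int (dotE prox N D \<nu>)"
      unfolding h_def dotE_def by (simp add: left_diff_distrib sum_subtractf sum_distrib_left mult.assoc)
    also have "\<dots> = real_of_int (dotE prox N F \<nu> - 2 + int (valence prox N \<nu>))"
      using g_dot[OF v nI, of F] dD unfolding g_def by simp
    finally have e1: "(\<Sum>\<gamma>\<in>?I. h \<gamma> * real_of_int (inum prox N \<gamma> \<nu>))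
        = real_of_int (dotE prox N F \<nu> - 2 + int (valence prox N \<nu>))" .
    have "(\<Sum>\<gamma>\<in>?I. h \<gamma> * real_of_int (inum prox N \<gamma> \<nu>))
        = h \<nu> * real_of_int (inum prox N \<nu> \<nu>) + (\<Sum>\<gamma>\<in>?I-{\<nu>}. h \<gamma> * real_of_int (inum prox N \<gamma> \<nu>))"
      using nI by (simp add: sum.remove)
    also have "(\<Sum>\<gamma>\<in>?I-{\<nu>}. h \<gamma> * real_of_int (inum prox N \<gamma> \<nu>))
        = (\<Sum>\<gamma>\<in>?I-{\<nu>}. if dual_adj prox N \<nu> \<gamma> then h \<gamma> else 0)"
      using nI by (intro sum.cong refl) (auto simp: inum_offdiag[OF v] dual_adj_sym)
    also have "\<dots> = (\<Sum>\<gamma>\<in>A. h \<gamma>)"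
      unfolding A_def by (simp add: sum.inter_filter[symmetric]) (intro sum.cong, auto simp: dual_adj_def)
    finally have e2: "(\<Sum>\<gamma>\<in>A. h \<gamma>) = real_of_int (dotE prox N F \<nu> - 2 + int (valence prox N \<nu>))"
      using e1 h0 by simp
    have Ann: "\<gamma> \<in> A \<Longrightarrow> 0 \<le> h \<gamma>" for \<gamma> using hnn unfolding A_def by auto
    have fA: "finite A" unfolding A_def by simp
    have "(\<Sum>\<gamma>\<in>A. h \<gamma>) \<ge> 0" using Ann by (simp add: sum_nonneg)
    then have c1: "2 \<le> valence prox N \<nu>" using e2 dF by linarith
    have "(\<Sum>\<gamma>\<in>A. h \<gamma>) \<le> 0" using e2 dF val2 by linarith
    then have "(\<Sum>\<gamma>\<in>A. h \<gamma>) = 0" using \<open>(\<Sum>\<gamma>\<in>A. h \<gamma>) \<ge> 0\<close> by linarith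
    then have "\<forall>\<gamma>\<in>A. h \<gamma> = 0" using sum_nonneg_eq_0_iff[OF fA] Ann by blast
    then have "\<forall>\<gamma>\<in>?I. dual_adj prox N \<nu> \<gamma> \<longrightarrow> \<gamma> \<in> S" unfolding A_def S_def by auto
    then show ?thesis using c1 by blast
  qed
  have "S = ?I"
  proof (rule connected[OF v])
    show "S \<subseteq> ?I" unfolding S_def by auto
    show "S \<noteq> {}" using nu0 lam_h unfolding S_def by auto
    show "\<And>j k. j \<in> S \<Longrightarrow> k \<in> ?I \<Longrightarrow> dual_adj prox N j k \<Longrightarrow> k \<in> S" using Sprop by blast
  qed
  moreover obtain l where "l \<in> ?I" "valence prox N l \<le> 1" using leaf[OF v N1] by blast
  ultimately show False using Sprop[of l] by auto
qed


theorem mainTheorem13: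
  fixes prox :: "nat \<Rightarrow> nat \<Rightarrow> bool" and N :: nat and D F :: "nat \<Rightarrow> int"
  assumes "valid_blowups prox N"
    and "antinef prox N D" and "\<exists>\<nu>\<in>{1..N}. D \<nu> \<noteq> 0"
    and "antinef prox N F"
  shows "(\<exists>\<nu>\<in>{1..N}. lam prox N F D \<nu> = xi prox N F D \<and>
            (3 \<le> valence prox N \<nu> \<or> dhat prox N D \<nu> > 0))
       \<and> (\<forall>\<xi>\<in>jumping_numbers prox N D. \<exists>\<nu>\<in>{1..N}.
            (3 \<le> valence prox N \<nu> \<or> dhat prox N D \<nu> > 0) \<and> \<xi> \<in> Hset prox N D \<nu>)"
proof
  show "\<exists>\<nu>\<in>{1..N}. lam prox N F D \<nu> = xi prox N F D \<and>
            (3 \<le> valence prox N \<nu> \<or> dhat prox N D \<nu> > 0)"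
    by (rule part1[OF assms])
  show "\<forall>\<xi>\<in>jumping_numbers prox N D. \<exists>\<nu>\<in>{1..N}.
            (3 \<le> valence prox N \<nu> \<or> dhat prox N D \<nu> > 0) \<and> \<xi> \<in> Hset prox N D \<nu>"
  proof
    fix \<xi> assume "\<xi> \<in> jumping_numbers prox N D"
    then obtain G where G: "antinef prox N G" "\<xi> = xi prox N G D" unfolding jumping_numbers_def by blast
    obtain \<nu> where nu: "\<nu> \<in> {1..N}" "lam prox N G D \<nu> = xi prox N G D"
        "3 \<le> valence prox N \<nu> \<or> dhat prox N D \<nu> > 0"
      using part1[OF assms(1,2,3) G(1)] by blast
    have "\<xi> \<in> Hset prox N D \<nu>" unfolding Hset_def using G nu(2) by auto
    then show "\<exists>\<nu>\<in>{1..N}. (3 \<le> valence prox N \<nu> \<or> dhat prox N D \<nu> > 0) \<and> \<xi> \<in> Hset prox N D \<nu>"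
      using nu by blast
  qed
qed

end
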